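(* Let $\mathcal{F}$ be a Fraïssé class with hereditary canonical disjoint amalgamation, let $X$ be its Fraïssé limit, let $\Gamma$ be the automorphism group of $X$ acting by application, and let $I$ be the ideal of finite subsets of $X$. Then $\Gamma\curvearrowright X, I$ is a simple dynamical ideal.
   Context: For a group $\Gamma$ acting on $X$ and $a\subseteq X$, $\mathrm{pstab}(a)=\{\gamma\in\Gamma:\gamma\cdot x=x\ \forall x\in a\}$. A dynamical ideal $\Gamma\curvearrowright X, I$ (a $\Gamma$-invariant ideal containing all singletons) is simple if for all $a\subseteq b$ in $I$, the only normal subgroup of $\mathrm{pstab}(a)$ containing $\mathrm{pstab}(b)$ is $\mathrm{pstab}(a)$ itself. For structures, the algebraic closure of a set is its closure under all functions of the structure. Two $\mathcal{F}$-structures $A,B$ are in amalgamation position if they induce the same substructure on $\mathrm{dom}(A)\cap\mathrm{dom}(B)$; a disjoint amalgamation of them is a structure in $\mathcal{F}$ with domain containing $\mathrm{dom}(A)\cup\mathrm{dom}(B)$ inducing $A$ and $B$ on their domains, and it is minimal if it is generated (is the algebraic closure of) $\mathrm{dom}(A)\cup\mathrm{dom}(B)$. $\mathcal F$ (a Fraïssé class with disjoint amalgamation) has hereditary canonical amalgamation if there is a function $C$ assigning to each pair $\langle A,B\rangle$ of $\mathcal{F}$-structures in amalgamation position a minimal disjoint amalgamation $C(A,B)$ such that: (1) (invariance) if $\phi:A\to A'$, $\psi:B\to B'$ are isomorphisms agreeing on $\mathrm{dom}(A)\cap\mathrm{dom}(B)$ (with $A',B'$ in amalgamation position), then there is an isomorphism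 of $C(A,B)$ onto $C(A',B')$ extending $\phi\cup\psi$; (2) (heredity in the left variable) if $A'$ is an induced substructure of $A$ with $\mathrm{dom}(A)\cap\mathrm{dom}(B)\subseteq\mathrm{dom}(A')$, then $C(A',B)$ is isomorphic to the substructure of $C(A,B)$ on the algebraic closure of $\mathrm{dom}(A')\cup\mathrm{dom}(B)$ via an isomorphism that is the identity on $\mathrm{dom}(A')\cup\mathrm{dom}(B)$. *)

theory Defs
  imports "HOL-Algebra.Coset" "HOL-Library.Countable_Set"
begin

text \<open>A signature is given by arity functions rar (relation symbols 'r) and
far (function symbols 'f). A structure has a domain, relation and function
interpretations; only the values on tuples from the domain matter.\<close>

record ('a, 'r, 'f) struc =
  sdom :: "'a set"
  srel :: "'r \<Rightarrow> 'a list \<Rightarrow> bool"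
  sfun :: "'f \<Rightarrow> 'a list \<Rightarrow> 'a"

definition tuples :: "('s \<Rightarrow> nat) \<Rightarrow> 's \<Rightarrow> 'a set \<Rightarrow> 'a list set" where
  "tuples ar s S = {xs. length xs = ar s \<and> set xs \<subseteq> S}"

definition closed_under :: "('f \<Rightarrow> nat) \<Rightarrow> ('a,'r,'f) struc \<Rightarrow> 'a set \<Rightarrow> bool" where
  "closed_under far M S \<longleftrightarrow> (\<forall>f. \<forall>xs \<in> tuples far f S. sfun M f xs \<in> S)"

definition is_struct :: "('f \<Rightarrow> nat) \<Rightarrow> ('a,'r,'f) struc \<Rightarrow> bool" where
  "is_struct far M \<longleftrightarrow> closed_under far M (sdom M)"

inductive_set acl :: "('f \<Rightarrow> nat) \<Rightarrow> ('a,'r,'f) struc \<Rightarrow> 'a set \<Rightarrow> 'a set"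
  for far M S where
  base: "x \<in> S \<Longrightarrow> x \<in> acl far M S"
| step: "length xs = far f \<Longrightarrow> \<forall>y\<in>set xs. y \<in> acl far M S \<Longrightarrow> sfun M f xs \<in> acl far M S"

definition restr :: "('a,'r,'f) struc \<Rightarrow> 'a set \<Rightarrow> ('a,'r,'f) struc" where
  "restr M T = M\<lparr>sdom := T\<rparr>"

definition embedding :: "('r \<Rightarrow> nat) \<Rightarrow> ('f \<Rightarrow> nat) \<Rightarrow> ('a \<Rightarrow> 'b)
    \<Rightarrow> ('a,'r,'f) struc \<Rightarrow> ('b,'r,'f) struc \<Rightarrow> bool" where
  "embedding rar far e A B \<longleftrightarrow>
     inj_on e (sdom A) \<and> e ` sdom A \<subseteq> sdom B \<and>
     (\<forall>r. \<forall>xs \<in> tuples rar r (sdom A). srel B r (map e xs) = srel A r xs) \<and>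
     (\<forall>f. \<forall>xs \<in> tuples far f (sdom A). sfun B f (map e xs) = e (sfun A f xs))"

definition siso :: "('r \<Rightarrow> nat) \<Rightarrow> ('f \<Rightarrow> nat) \<Rightarrow> ('a \<Rightarrow> 'b)
    \<Rightarrow> ('a,'r,'f) struc \<Rightarrow> ('b,'r,'f) struc \<Rightarrow> bool" where
  "siso rar far e A B \<longleftrightarrow> embedding rar far e A B \<and> e ` sdom A = sdom B"

definition induced_sub :: "('r \<Rightarrow> nat) \<Rightarrow> ('f \<Rightarrow> nat)
    \<Rightarrow> ('a,'r,'f) struc \<Rightarrow> ('a,'r,'f) struc \<Rightarrow> bool" where
  "induced_sub rar far A B \<longleftrightarrow> is_struct far A \<and> sdom A \<subseteq> sdom B \<and>
     (\<forall>r. \<forall>xs \<in> tuples rar r (sdom A). srel A r xs = srel B r xs) \<and>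
     (\<forall>f. \<forall>xs \<in> tuples far f (sdom A). sfun A f xs = sfun B f xs)"

definition amalg_pos :: "('r \<Rightarrow> nat) \<Rightarrow> ('f \<Rightarrow> nat)
    \<Rightarrow> ('a,'r,'f) struc \<Rightarrow> ('a,'r,'f) struc \<Rightarrow> bool" where
  "amalg_pos rar far A B \<longleftrightarrow>
     (\<forall>r. \<forall>xs \<in> tuples rar r (sdom A \<inter> sdom B). srel A r xs = srel B r xs) \<and>
     (\<forall>f. \<forall>xs \<in> tuples far f (sdom A \<inter> sdom B). sfun A f xs = sfun B f xs)"

definition fraisse_class :: "('r \<Rightarrow> nat) \<Rightarrow> ('f \<Rightarrow> nat) \<Rightarrow> (nat,'r,'f) struc set \<Rightarrow> bool" where
  "fraisse_class rar far F \<longleftrightarrow>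
     F \<noteq> {} \<and>
     (\<forall>A\<in>F. is_struct far A \<and> finite (sdom A)) \<and>
     (\<forall>A\<in>F. \<forall>B e. is_struct far B \<and> siso rar far e A B \<longrightarrow> B \<in> F) \<and>
     (\<forall>A\<in>F. \<forall>T. T \<subseteq> sdom A \<and> closed_under far A T \<longrightarrow> restr A T \<in> F) \<and>
     (\<forall>A\<in>F. \<forall>B\<in>F. \<exists>D\<in>F. \<exists>g1 g2. embedding rar far g1 A D \<and> embedding rar far g2 B D) \<and>
     (\<forall>A\<in>F. \<forall>B\<in>F. \<forall>C\<in>F. \<forall>e1 e2. embedding rar far e1 A B \<and> embedding rar far e2 A C \<longrightarrow>
        (\<exists>D\<in>F. \<exists>g1 g2. embedding rar far g1 B D \<and> embedding rar far g2 C D \<and>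
           (\<forall>x\<in>sdom A. g1 (e1 x) = g2 (e2 x)))) \<and>
     (\<exists>S. countable S \<and> S \<subseteq> F \<and> (\<forall>A\<in>F. \<exists>B\<in>S. \<exists>e. siso rar far e A B))"

definition is_amalgamation :: "('r \<Rightarrow> nat) \<Rightarrow> ('f \<Rightarrow> nat) \<Rightarrow> (nat,'r,'f) struc set
    \<Rightarrow> (nat,'r,'f) struc \<Rightarrow> (nat,'r,'f) struc \<Rightarrow> (nat,'r,'f) struc \<Rightarrow> bool" where
  "is_amalgamation rar far F A B D \<longleftrightarrow> D \<in> F \<and> sdom A \<union> sdom B \<subseteq> sdom D \<and>
     induced_sub rar far A D \<and> induced_sub rar far B D"

definition minimal_amalgamation :: "('r \<Rightarrow> nat) \<Rightarrow> ('f \<Rightarrow> nat) \<Rightarrow> (nat,'r,'f) struc set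
    \<Rightarrow> (nat,'r,'f) struc \<Rightarrow> (nat,'r,'f) struc \<Rightarrow> (nat,'r,'f) struc \<Rightarrow> bool" where
  "minimal_amalgamation rar far F A B D \<longleftrightarrow> is_amalgamation rar far F A B D \<and>
     sdom D = acl far D (sdom A \<union> sdom B)"

definition disjoint_amalgamation :: "('r \<Rightarrow> nat) \<Rightarrow> ('f \<Rightarrow> nat) \<Rightarrow> (nat,'r,'f) struc set \<Rightarrow> bool" where
  "disjoint_amalgamation rar far F \<longleftrightarrow>
     (\<forall>A\<in>F. \<forall>B\<in>F. amalg_pos rar far A B \<longrightarrow> (\<exists>D. is_amalgamation rar far F A B D))"

definition hereditary_canonical_amalgamation :: "('r \<Rightarrow> nat) \<Rightarrow> ('f \<Rightarrow> nat) \<Rightarrow> (nat,'r,'f) struc set \<Rightarrow> bool" where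
  "hereditary_canonical_amalgamation rar far F \<longleftrightarrow>
    (\<exists>C. (\<forall>A\<in>F. \<forall>B\<in>F. amalg_pos rar far A B \<longrightarrow> minimal_amalgamation rar far F A B (C A B)) \<and>
      \<comment> \<open>invariance\<close>
      (\<forall>A\<in>F. \<forall>B\<in>F. \<forall>A'\<in>F. \<forall>B'\<in>F. \<forall>\<phi> \<psi>.
         amalg_pos rar far A B \<and> amalg_pos rar far A' B' \<and>
         siso rar far \<phi> A A' \<and> siso rar far \<psi> B B' \<and>
         (\<forall>x \<in> sdom A \<inter> sdom B. \<phi> x = \<psi> x) \<and>
         \<phi> ` (sdom A \<inter> sdom B) = sdom A' \<inter> sdom B' \<longrightarrow>
         (\<exists>\<theta>. siso rar far \<theta> (C A B) (C A' B') \<and> (\<forall>x\<in>sdom A. \<theta> x = \<phi> x) \<and>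
               (\<forall>x\<in>sdom B. \<theta> x = \<psi> x))) \<and>
      \<comment> \<open>heredity in the left variable\<close>
      (\<forall>A\<in>F. \<forall>B\<in>F. \<forall>A'\<in>F.
         amalg_pos rar far A B \<and> induced_sub rar far A' A \<and> sdom A \<inter> sdom B \<subseteq> sdom A' \<longrightarrow>
         (\<exists>\<theta>. siso rar far \<theta> (C A' B)
                 (restr (C A B) (acl far (C A B) (sdom A' \<union> sdom B))) \<and>
               (\<forall>x \<in> sdom A' \<union> sdom B. \<theta> x = x))))"

definition ultrahomogeneous :: "('r \<Rightarrow> nat) \<Rightarrow> ('f \<Rightarrow> nat) \<Rightarrow> ('a,'r,'f) struc \<Rightarrow> bool" where
  "ultrahomogeneous rar far X \<longleftrightarrow>
     (\<forall>S T \<phi>. finite S \<and> finite T \<and> S \<subseteq> sdom X \<and> T \<subseteq> sdom X \<and>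
        siso rar far \<phi> (restr X (acl far X S)) (restr X (acl far X T)) \<longrightarrow>
        (\<exists>\<psi>. siso rar far \<psi> X X \<and> (\<forall>x \<in> acl far X S. \<psi> x = \<phi> x)))"

text \<open>X is a Fraisse limit of F: a countable (domain in nat) structure whose age
(finitely generated substructures, up to isomorphism) is F, and which is ultrahomogeneous.\<close>
definition fraisse_limit :: "('r \<Rightarrow> nat) \<Rightarrow> ('f \<Rightarrow> nat) \<Rightarrow> (nat,'r,'f) struc set
    \<Rightarrow> (nat,'r,'f) struc \<Rightarrow> bool" where
  "fraisse_limit rar far F X \<longleftrightarrow> is_struct far X \<and>
     (\<forall>S. finite S \<and> S \<subseteq> sdom X \<longrightarrow> restr X (acl far X S) \<in> F) \<and>
     (\<forall>A\<in>F. \<exists>e. embedding rar far e A X) \<and>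
     ultrahomogeneous rar far X"

definition aut_group :: "('r \<Rightarrow> nat) \<Rightarrow> ('f \<Rightarrow> nat) \<Rightarrow> ('a,'r,'f) struc \<Rightarrow> ('a \<Rightarrow> 'a) monoid" where
  "aut_group rar far X =
     \<lparr>carrier = {g. siso rar far g X X \<and> (\<forall>x. x \<notin> sdom X \<longrightarrow> g x = x)},
      mult = (\<lambda>g h. g \<circ> h), one = id\<rparr>"

definition group_act :: "('g, 'm) monoid_scheme \<Rightarrow> 'x set \<Rightarrow> ('g \<Rightarrow> 'x \<Rightarrow> 'x) \<Rightarrow> bool" where
  "group_act G X act \<longleftrightarrow> group G \<and>
     (\<forall>g\<in>carrier G. bij_betw (act g) X X) \<and>
     (\<forall>x\<in>X. act (one G) x = x) \<and>
     (\<forall>g\<in>carrier G. \<forall>h\<in>carrier G. \<forall>x\<in>X. act (mult G g h) x = act g (act h x))"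

definition ideal_on :: "'x set \<Rightarrow> 'x set set \<Rightarrow> bool" where
  "ideal_on X I \<longleftrightarrow> I \<subseteq> Pow X \<and> {} \<in> I \<and>
     (\<forall>a\<in>I. \<forall>b. b \<subseteq> a \<longrightarrow> b \<in> I) \<and> (\<forall>a\<in>I. \<forall>b\<in>I. a \<union> b \<in> I)"

definition dynamical_ideal :: "('g, 'm) monoid_scheme \<Rightarrow> 'x set \<Rightarrow> ('g \<Rightarrow> 'x \<Rightarrow> 'x) \<Rightarrow> 'x set set \<Rightarrow> bool" where
  "dynamical_ideal G X act I \<longleftrightarrow> group_act G X act \<and> ideal_on X I \<and>
     (\<forall>g\<in>carrier G. \<forall>a\<in>I. act g ` a \<in> I) \<and> (\<forall>x\<in>X. {x} \<in> I)"

definition pstab :: "('g, 'm) monoid_scheme \<Rightarrow> ('g \<Rightarrow> 'x \<Rightarrow> 'x) \<Rightarrow> 'x set \<Rightarrow> 'g set" where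
  "pstab G act a = {g \<in> carrier G. \<forall>x\<in>a. act g x = x}"

definition simple_dynamical_ideal :: "('g, 'm) monoid_scheme \<Rightarrow> 'x set \<Rightarrow> ('g \<Rightarrow> 'x \<Rightarrow> 'x) \<Rightarrow> 'x set set \<Rightarrow> bool" where
  "simple_dynamical_ideal G X act I \<longleftrightarrow> dynamical_ideal G X act I \<and>
     (\<forall>a\<in>I. \<forall>b\<in>I. a \<subseteq> b \<longrightarrow>
        (\<forall>N. normal N (G\<lparr>carrier := pstab G act a\<rparr>) \<and> pstab G act b \<subseteq> N \<longrightarrow> N = pstab G act a))"

end

theory Submission
  imports Defs
begin


lemma closed_restr[simp]: "closed_under far (restr M T) = closed_under far M"
  by (simp add: closed_under_def restr_def fun_eq_iff)

lemma restr_simps[simp]: "sdom (restr M T) = T" "srel (restr M T) = srel M" "sfun (restr M T) = sfun M"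
  by (simp_all add: restr_def)

lemma restr_self[simp]: "restr M (sdom M) = M" by (simp add: restr_def)

lemma acl_base_sub: "S \<subseteq> acl far M S" by (auto intro: acl.base)

lemma acl_closed: "closed_under far M (acl far M S)"
  unfolding closed_under_def tuples_def by (auto intro: acl.step)

lemma acl_least: assumes "closed_under far M T" "S \<subseteq> T" shows "acl far M S \<subseteq> T"
proof
  fix x assume "x \<in> acl far M S" then show "x \<in> T"
  proof (induction rule: acl.induct)
    case (base x) then show ?case using assms by auto
  next
    case (step xs f) then show ?case using assms(1) unfolding closed_under_def tuples_def by auto
  qed
qed

lemma acl_mono: "S \<subseteq> T \<Longrightarrow> acl far M S \<subseteq> acl far M T"
  by (meson acl_base_sub acl_closed acl_least order_trans)

lemma acl_closed_eq: "closed_under far M T \<Longrightarrow> acl far M T = T"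
  by (simp add: acl_base_sub acl_least subset_antisym)

lemma acl_sub_dom: "is_struct far M \<Longrightarrow> S \<subseteq> sdom M \<Longrightarrow> acl far M S \<subseteq> sdom M"
  by (simp add: acl_least is_struct_def)

lemma acl_restr[simp]: "acl far (restr M T) S = acl far M S"
  by (metis acl_base_sub acl_closed acl_least closed_restr subset_antisym)

lemma list_lift: "set xs \<subseteq> e ` T \<Longrightarrow> \<exists>ys. xs = map e ys \<and> set ys \<subseteq> T"
proof (induction xs)
  case Nil then show ?case by auto
next
  case (Cons x xs)
  then obtain ys where "xs = map e ys" "set ys \<subseteq> T" by auto
  moreover obtain y where "y \<in> T" "x = e y" using Cons by auto
  ultimately show ?case by (intro exI[of _ "y # ys"]) auto
qed

lemma emb_acl:
  assumes e: "embedding rar far e A B" and st: "is_struct far A" and S: "S \<subseteq> sdom A"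
  shows "e ` acl far A S = acl far B (e ` S)"
proof
  have dom: "acl far A S \<subseteq> sdom A" using acl_sub_dom[OF st S] .
  have "\<forall>x\<in>acl far A S. e x \<in> acl far B (e ` S)"
  proof
    fix x assume "x \<in> acl far A S" then show "e x \<in> acl far B (e ` S)"
    proof (induction rule: acl.induct)
      case (base x) then show ?case by (auto intro: acl.base)
    next
      case (step xs f)
      have s1: "\<forall>y\<in>set xs. y \<in> acl far A S \<and> e y \<in> acl far B (e ` S)" using step.IH by simp
      have "set xs \<subseteq> sdom A" using s1 dom by blast
      then have xsd: "xs \<in> tuples far f (sdom A)" using step.hyps(1) unfolding tuples_def by simp
      then have "e (sfun A f xs) = sfun B f (map e xs)" using e unfolding embedding_def by auto
      also have "\<dots> \<in> acl far B (e ` S)"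
        by (rule acl.step) (use s1 step.hyps(1) in auto)
      finally show ?case .
    qed
  qed
  then show "e ` acl far A S \<subseteq> acl far B (e ` S)" by auto
next
  have "closed_under far B (e ` acl far A S)"
    unfolding closed_under_def
  proof (intro allI ballI)
    fix f xs assume "xs \<in> tuples far f (e ` acl far A S)"
    then have xl: "length xs = far f" and xs1: "set xs \<subseteq> e ` acl far A S" unfolding tuples_def by auto
    obtain ys where ys: "xs = map e ys" "set ys \<subseteq> acl far A S" using list_lift[OF xs1] by blast
    have yl: "length ys = far f" using xl ys(1) by simp
    have "set ys \<subseteq> sdom A" using acl_sub_dom[OF st S] ys(2) by blast
    then have "ys \<in> tuples far f (sdom A)" using yl unfolding tuples_def by simp
    then have "sfun B f xs = e (sfun A f ys)" using e ys(1) unfolding embedding_def by blast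
    moreover have "sfun A f ys \<in> acl far A S" using acl_closed[of far A S] ys(2) yl unfolding closed_under_def tuples_def by blast
    ultimately show "sfun B f xs \<in> e ` acl far A S" by auto
  qed
  moreover have "e ` S \<subseteq> e ` acl far A S" using acl_base_sub[of S far A] by blast
  ultimately show "acl far B (e ` S) \<subseteq> e ` acl far A S" by (rule acl_least)
qed

lemma siso_emb: "siso rar far e A B \<Longrightarrow> embedding rar far e A B" by (simp add: siso_def)

lemma emb_comp:
  assumes e1: "embedding rar far e A B" and e2: "embedding rar far e' B C"
  shows "embedding rar far (e' \<circ> e) A C"
  unfolding embedding_def
proof (intro conjI allI ballI)
  show "inj_on (e' \<circ> e) (sdom A)" using e1 e2 unfolding embedding_def by (auto intro: comp_inj_on inj_on_subset)
  show "(e' \<circ> e) ` sdom A \<subseteq> sdom C" using e1 e2 unfolding embedding_def by auto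
next
  fix r xs assume xs: "xs \<in> tuples rar r (sdom A)"
  then have m: "map e xs \<in> tuples rar r (sdom B)" using e1 unfolding tuples_def embedding_def by auto
  have 1: "srel B r (map e xs) = srel A r xs" using e1 xs unfolding embedding_def by blast
  have 2: "srel C r (map e' (map e xs)) = srel B r (map e xs)" using e2 m unfolding embedding_def by blast
  show "srel C r (map (e' \<circ> e) xs) = srel A r xs" using 1 2 by simp
next
  fix f xs assume xs: "xs \<in> tuples far f (sdom A)"
  then have m: "map e xs \<in> tuples far f (sdom B)" using e1 unfolding tuples_def embedding_def by auto
  have 1: "sfun B f (map e xs) = e (sfun A f xs)" using e1 xs unfolding embedding_def by blast
  have 2: "sfun C f (map e' (map e xs)) = e' (sfun B f (map e xs))" using e2 m unfolding embedding_def by blast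
  show "sfun C f (map (e' \<circ> e) xs) = (e' \<circ> e) (sfun A f xs)" using 1 2 by simp
qed



lemma embD:
  assumes "embedding rar far e A B"
  shows "inj_on e (sdom A)" "e ` sdom A \<subseteq> sdom B"
    "xs \<in> tuples rar r (sdom A) \<Longrightarrow> srel B r (map e xs) = srel A r xs"
    "ys \<in> tuples far f (sdom A) \<Longrightarrow> sfun B f (map e ys) = e (sfun A f ys)"
  using assms unfolding embedding_def by blast+

lemma siso_comp:
  assumes "siso rar far e A B" "siso rar far e' B C"
  shows "siso rar far (e' \<circ> e) A C"
proof -
  have "embedding rar far (e' \<circ> e) A C" by (rule emb_comp[OF siso_emb[OF assms(1)] siso_emb[OF assms(2)]])
  moreover have "(e' \<circ> e) ` sdom A = sdom C"
  proof -
    have "e ` sdom A = sdom B" "e' ` sdom B = sdom C" using assms unfolding siso_def by auto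
    moreover have "(e' \<circ> e) ` sdom A = e' ` (e ` sdom A)" by (rule image_comp[symmetric])
    ultimately show ?thesis by simp
  qed
  ultimately show ?thesis unfolding siso_def by blast
qed

lemma emb_cong:
  assumes e: "embedding rar far e A B" and st: "is_struct far A" and eq: "\<forall>x\<in>sdom A. e x = e' x"
  shows "embedding rar far e' A B"
  unfolding embedding_def
proof (intro conjI allI ballI)
  have "inj_on e (sdom A) = inj_on e' (sdom A)" by (rule inj_on_cong) (use eq in blast)
  then show "inj_on e' (sdom A)" using embD(1)[OF e] by simp
  have "e ` sdom A = e' ` sdom A" by (rule image_cong) (use eq in blast)+
  then show "e' ` sdom A \<subseteq> sdom B" using embD(2)[OF e] by simp
next
  fix r xs assume xs: "xs \<in> tuples rar r (sdom A)"
  then have "set xs \<subseteq> sdom A" unfolding tuples_def by simp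
  then have m: "map e' xs = map e xs" using eq unfolding map_eq_conv by auto
  show "srel B r (map e' xs) = srel A r xs" by (simp only: m embD(3)[OF e xs])
next
  fix f xs assume xs: "xs \<in> tuples far f (sdom A)"
  then have "set xs \<subseteq> sdom A" unfolding tuples_def by simp
  then have m: "map e' xs = map e xs" using eq unfolding map_eq_conv by auto
  have "sfun A f xs \<in> sdom A" using st xs unfolding is_struct_def closed_under_def by blast
  then have c2: "e' (sfun A f xs) = e (sfun A f xs)" using eq by simp
  show "sfun B f (map e' xs) = e' (sfun A f xs)" by (simp only: m c2 embD(4)[OF e xs])
qed

lemma siso_cong:
  assumes "siso rar far e A B" "is_struct far A" "\<forall>x\<in>sdom A. e x = e' x"
  shows "siso rar far e' A B"
proof -
  have "embedding rar far e' A B" using emb_cong[OF siso_emb[OF assms(1)] assms(2,3)] .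
  moreover have "e' ` sdom A = sdom B"
  proof -
    have "e ` sdom A = sdom B" using assms(1) unfolding siso_def by auto
    moreover have "e ` sdom A = e' ` sdom A" using assms(3) by (intro image_cong) auto
    ultimately show ?thesis by simp
  qed
  ultimately show ?thesis unfolding siso_def by blast
qed

lemma siso_inv:
  assumes s: "siso rar far e A B" and st: "is_struct far A"
  shows "siso rar far (inv_into (sdom A) e) B A"
proof -
  have inj: "inj_on e (sdom A)" and im: "e ` sdom A = sdom B" using s embD(1) unfolding siso_def by blast+
  let ?i = "inv_into (sdom A) e"
  have ii: "?i (e x) = x" if "x \<in> sdom A" for x using inj that by simp
  have lift: "\<exists>xs. ys = map e xs \<and> set xs \<subseteq> sdom A" if "set ys \<subseteq> sdom B" for ys
    using that list_lift[of ys e "sdom A"] im by simp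
  have mi: "map ?i (map e xs) = xs" if "set xs \<subseteq> sdom A" for xs
    using that ii by (induction xs) auto
  show ?thesis unfolding siso_def embedding_def
  proof (intro conjI allI ballI)
    show "inj_on ?i (sdom B)" using inj im by (metis inj_on_inv_into order_refl)
    show "?i ` sdom B \<subseteq> sdom A" using im by (auto intro: inv_into_into)
    show "?i ` sdom B = sdom A" using inj im by (metis inv_into_image_cancel order_refl)
  next
    fix r ys assume "ys \<in> tuples rar r (sdom B)"
    then have yl: "length ys = rar r" and ys: "set ys \<subseteq> sdom B" unfolding tuples_def by auto
    obtain xs where xs0: "ys = map e xs" "set xs \<subseteq> sdom A" using lift[OF ys] by blast
    have xs: "ys = map e xs" "length xs = rar r" "set xs \<subseteq> sdom A" using xs0 yl by auto
    then have xt: "xs \<in> tuples rar r (sdom A)" unfolding tuples_def by simp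
    have "srel B r ys = srel A r xs" using embD(3)[OF siso_emb[OF s] xt] xs(1) by simp
    then show "srel A r (map ?i ys) = srel B r ys" using mi[OF xs(3)] xs(1) by simp
  next
    fix f ys assume "ys \<in> tuples far f (sdom B)"
    then have yl: "length ys = far f" and ys: "set ys \<subseteq> sdom B" unfolding tuples_def by auto
    obtain xs where xs0: "ys = map e xs" "set xs \<subseteq> sdom A" using lift[OF ys] by blast
    have xs: "ys = map e xs" "length xs = far f" "set xs \<subseteq> sdom A" using xs0 yl by auto
    then have xt: "xs \<in> tuples far f (sdom A)" unfolding tuples_def by simp
    have c: "sfun A f xs \<in> sdom A" using st xt unfolding is_struct_def closed_under_def by blast
    have "sfun B f ys = e (sfun A f xs)" using embD(4)[OF siso_emb[OF s] xt] xs(1) by simp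
    then show "sfun A f (map ?i ys) = ?i (sfun B f ys)" using mi[OF xs(3)] xs(1) ii[OF c] by simp
  qed
qed

lemma emb_restr:
  assumes "embedding rar far e A B" "T \<subseteq> sdom A"
  shows "siso rar far e (restr A T) (restr B (e ` T))"
  using assms unfolding siso_def embedding_def tuples_def
  by (auto intro: inj_on_subset)

lemma siso_id: "siso rar far id A A"
  unfolding siso_def embedding_def by (simp add: map_idI)



definition copyS :: "(nat \<Rightarrow> nat) \<Rightarrow> (nat,'r,'f) struc \<Rightarrow> (nat,'r,'f) struc" where
  "copyS f M = \<lparr>sdom = f ` sdom M, srel = (\<lambda>r xs. srel M r (map (inv_into UNIV f) xs)),
                sfun = (\<lambda>s xs. f (sfun M s (map (inv_into UNIV f) xs)))\<rparr>"

lemma copyS_simps[simp]: "sdom (copyS f M) = f ` sdom M"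
  "srel (copyS f M) r xs = srel M r (map (inv_into UNIV f) xs)"
  "sfun (copyS f M) s xs = f (sfun M s (map (inv_into UNIV f) xs))"
  by (simp_all add: copyS_def)

lemma map_inv_map: "inj f \<Longrightarrow> map (inv_into UNIV f) (map f xs) = xs"
  by (induction xs) simp_all

lemma copy_siso: assumes "inj f" shows "siso rar far f M (copyS f M)"
  unfolding siso_def embedding_def
proof (intro conjI allI ballI)
  show "inj_on f (sdom M)" using assms inj_on_subset by blast
qed (simp_all add: inv_o_cancel[OF assms])

lemma copy_struct: assumes "inj f" "is_struct far M" shows "is_struct far (copyS f M)"
  unfolding is_struct_def closed_under_def
proof (intro allI ballI)
  fix s xs assume "xs \<in> tuples far s (sdom (copyS f M))"
  then have l: "length xs = far s" and xs: "set xs \<subseteq> f ` sdom M" unfolding tuples_def by auto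
  obtain ys where ys: "xs = map f ys" "set ys \<subseteq> sdom M" using list_lift[OF xs] by blast
  have "ys \<in> tuples far s (sdom M)" using l ys unfolding tuples_def by simp
  then have "sfun M s ys \<in> sdom M" using assms(2) unfolding is_struct_def closed_under_def by blast
  then show "sfun (copyS f M) s xs \<in> sdom (copyS f M)" using ys(1) map_inv_map[OF assms(1)] by simp
qed

lemma map_inv_fix: assumes "inj f" "\<forall>x\<in>set xs. f x = x" shows "map (inv_into UNIV f) xs = xs"
  using assms by (induction xs) (auto, metis inv_f_f)

lemma emb_sub:
  assumes "induced_sub rar far A D" "embedding rar far e D X"
  shows "embedding rar far e A X"
  unfolding embedding_def
proof (intro conjI allI ballI)
  have s: "sdom A \<subseteq> sdom D" using assms(1) unfolding induced_sub_def by blast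
  show "inj_on e (sdom A)" using embD(1)[OF assms(2)] s inj_on_subset by blast
  show "e ` sdom A \<subseteq> sdom X" using embD(2)[OF assms(2)] s by blast
next
  fix r xs assume xs: "xs \<in> tuples rar r (sdom A)"
  have s: "sdom A \<subseteq> sdom D" using assms(1) unfolding induced_sub_def by blast
  have xd: "xs \<in> tuples rar r (sdom D)" using xs s unfolding tuples_def by auto
  have "srel A r xs = srel D r xs" using assms(1) xs unfolding induced_sub_def by blast
  then show "srel X r (map e xs) = srel A r xs" using embD(3)[OF assms(2) xd] by simp
next
  fix f xs assume xs: "xs \<in> tuples far f (sdom A)"
  have s: "sdom A \<subseteq> sdom D" using assms(1) unfolding induced_sub_def by blast
  have xd: "xs \<in> tuples far f (sdom D)" using xs s unfolding tuples_def by auto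
  have "sfun A f xs = sfun D f xs" using assms(1) xs unfolding induced_sub_def by blast
  then show "sfun X f (map e xs) = e (sfun A f xs)" using embD(4)[OF assms(2) xd] by simp
qed

lemma induced_closed:
  assumes "induced_sub rar far A D" shows "closed_under far D (sdom A)"
  unfolding closed_under_def
proof (intro allI ballI)
  fix f xs assume xs: "xs \<in> tuples far f (sdom A)"
  have "sfun A f xs = sfun D f xs" using assms xs unfolding induced_sub_def by blast
  moreover have "sfun A f xs \<in> sdom A" using assms xs unfolding induced_sub_def is_struct_def closed_under_def by blast
  ultimately show "sfun D f xs \<in> sdom A" by simp
qed

lemma induced_restr:
  assumes "closed_under far X K'" "K' \<subseteq> K"
  shows "induced_sub rar far (restr X K') (restr X K)"
  using assms unfolding induced_sub_def is_struct_def by simp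

lemma restr_struct: "closed_under far X K \<Longrightarrow> is_struct far (restr X K)"
  unfolding is_struct_def by simp

lemma fl_struct: "fraisse_limit rar far F X \<Longrightarrow> is_struct far X"
  unfolding fraisse_limit_def by blast

lemma fl_age: "fraisse_limit rar far F X \<Longrightarrow> finite S \<Longrightarrow> S \<subseteq> sdom X \<Longrightarrow> restr X (acl far X S) \<in> F"
  unfolding fraisse_limit_def by blast

lemma fl_univ: "fraisse_limit rar far F X \<Longrightarrow> A \<in> F \<Longrightarrow> \<exists>e. embedding rar far e A X"
  unfolding fraisse_limit_def by blast

lemma fl_uh:
  assumes "fraisse_limit rar far F X" "finite S" "finite T" "S \<subseteq> sdom X" "T \<subseteq> sdom X"
    "siso rar far \<phi> (restr X (acl far X S)) (restr X (acl far X T))"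
  shows "\<exists>\<psi>. siso rar far \<psi> X X \<and> (\<forall>x \<in> acl far X S. \<psi> x = \<phi> x)"
  using assms unfolding fraisse_limit_def ultrahomogeneous_def by blast

lemma fc_finite: "fraisse_class rar far F \<Longrightarrow> A \<in> F \<Longrightarrow> finite (sdom A)"
  unfolding fraisse_class_def by blast

lemma fc_struct: "fraisse_class rar far F \<Longrightarrow> A \<in> F \<Longrightarrow> is_struct far A"
  unfolding fraisse_class_def by blast

lemma fc_iso: "fraisse_class rar far F \<Longrightarrow> A \<in> F \<Longrightarrow> is_struct far B \<Longrightarrow> siso rar far e A B \<Longrightarrow> B \<in> F"
  unfolding fraisse_class_def by blast

lemma image_closed:
  assumes e: "embedding rar far e D X" and K: "closed_under far D K" "K \<subseteq> sdom D"
  shows "closed_under far X (e ` K)"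
  unfolding closed_under_def
proof (intro allI ballI)
  fix f xs assume "xs \<in> tuples far f (e ` K)"
  then have l: "length xs = far f" and xs: "set xs \<subseteq> e ` K" unfolding tuples_def by auto
  obtain ys where ys: "xs = map e ys" "set ys \<subseteq> K" using list_lift[OF xs] by blast
  have yt: "ys \<in> tuples far f (sdom D)" using l ys K(2) unfolding tuples_def by auto
  have "sfun D f ys \<in> K" using K(1) l ys unfolding closed_under_def tuples_def by auto
  then show "sfun X f xs \<in> e ` K" using embD(4)[OF e yt] ys(1) by simp
qed

lemma extension:
  assumes fl: "fraisse_limit rar far F X" and D: "D \<in> F" and K: "K \<subseteq> sdom X" "finite K"
    "closed_under far X K" "K \<subseteq> sdom D"
    and agf: "\<forall>f. \<forall>xs\<in>tuples far f K. sfun D f xs = sfun X f xs"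
    and agr: "\<forall>r. \<forall>xs\<in>tuples rar r K. srel D r xs = srel X r xs"
  shows "\<exists>e. embedding rar far e D X \<and> (\<forall>x\<in>K. e x = x)"
proof -
  have stX: "is_struct far X" using fl_struct[OF fl] .
  obtain e0 where e0: "embedding rar far e0 D X" using fl_univ[OF fl D] by blast
  have Kt: "xs \<in> tuples ar s K \<Longrightarrow> xs \<in> tuples ar s (sdom D)" for xs and ar :: "'q \<Rightarrow> nat" and s
    using K(4) unfolding tuples_def by auto
  have closedD: "closed_under far D K" unfolding closed_under_def
  proof (intro allI ballI)
    fix f xs assume xs: "xs \<in> tuples far f K"
    then have "sfun X f xs \<in> K" using K(3) unfolding closed_under_def by blast
    then show "sfun D f xs \<in> K" using agf xs by simp
  qed
  have cl: "closed_under far X (e0 ` K)" by (rule image_closed[OF e0 closedD K(4)])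
  have iso: "siso rar far e0 (restr X K) (restr X (e0 ` K))"
    unfolding siso_def embedding_def
  proof (intro conjI allI ballI)
    show "inj_on e0 (sdom (restr X K))" using embD(1)[OF e0] K(4) inj_on_subset by auto
  next
    fix r xs assume xs: "xs \<in> tuples rar r (sdom (restr X K))"
    then have xK: "xs \<in> tuples rar r K" by simp
    have "srel X r (map e0 xs) = srel D r xs" using embD(3)[OF e0 Kt[OF xK]] .
    then show "srel (restr X (e0 ` K)) r (map e0 xs) = srel (restr X K) r xs" using agr xK by simp
  next
    fix f xs assume xs: "xs \<in> tuples far f (sdom (restr X K))"
    then have xK: "xs \<in> tuples far f K" by simp
    have "sfun X f (map e0 xs) = e0 (sfun D f xs)" using embD(4)[OF e0 Kt[OF xK]] .
    then show "sfun (restr X (e0 ` K)) f (map e0 xs) = e0 (sfun (restr X K) f xs)" using agf xK by simp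
  qed auto
  have "acl far X K = K" using acl_closed_eq[OF K(3)] .
  moreover have "acl far X (e0 ` K) = e0 ` K" using acl_closed_eq[OF cl] .
  moreover have sub: "e0 ` K \<subseteq> sdom X" using embD(2)[OF e0] K(4) by blast
  moreover have fin: "finite (e0 ` K)" using K(2) by simp
  ultimately obtain \<psi> where \<psi>: "siso rar far \<psi> X X" "\<forall>x\<in>K. \<psi> x = e0 x"
    using fl_uh[OF fl K(2) fin K(1) sub, where \<phi>=e0] iso by auto
  let ?i = "inv_into (sdom X) \<psi>"
  have "siso rar far ?i X X" using siso_inv[OF \<psi>(1) stX] .
  then have "embedding rar far (?i \<circ> e0) D X" using emb_comp[OF e0] siso_emb by blast
  moreover have "\<forall>x\<in>K. (?i \<circ> e0) x = x"
  proof
    fix x assume x: "x \<in> K"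
    have "inj_on \<psi> (sdom X)" using embD(1)[OF siso_emb[OF \<psi>(1)]] .
    then have "?i (\<psi> x) = x" using x K(1) by (simp add: subset_iff)
    then show "(?i \<circ> e0) x = x" using \<psi>(2) x by simp
  qed
  ultimately show ?thesis by blast
qed

lemma aut_carrier: "g \<in> carrier (aut_group rar far X) \<longleftrightarrow> siso rar far g X X \<and> (\<forall>x. x \<notin> sdom X \<longrightarrow> g x = x)"
  by (simp add: aut_group_def)

lemma aut_mult[simp]: "mult (aut_group rar far X) g h = g \<circ> h" and aut_one[simp]: "one (aut_group rar far X) = id"
  by (simp_all add: aut_group_def)

lemma aut_ext:
  assumes "is_struct far X" "siso rar far \<psi> X X"
  shows "(\<lambda>x. if x \<in> sdom X then \<psi> x else x) \<in> carrier (aut_group rar far X)"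
  unfolding aut_carrier
proof
  show "siso rar far (\<lambda>x. if x \<in> sdom X then \<psi> x else x) X X" by (rule siso_cong[OF assms(2,1)]) simp
qed simp

lemma aut_fix_acl:
  assumes g: "siso rar far g X X" and st: "is_struct far X" and S: "S \<subseteq> sdom X" and fx: "\<forall>x\<in>S. g x = x"
  shows "\<forall>x\<in>acl far X S. g x = x"
proof
  have dom: "acl far X S \<subseteq> sdom X" using acl_sub_dom[OF st S] .
  fix x assume "x \<in> acl far X S" then show "g x = x"
  proof (induction rule: acl.induct)
    case (base x) then show ?case using fx by blast
  next
    case (step xs f)
    have s1: "\<forall>y\<in>set xs. y \<in> acl far X S \<and> g y = y" using step.IH by simp
    then have "set xs \<subseteq> sdom X" using dom by blast
    then have xt: "xs \<in> tuples far f (sdom X)" using step.hyps(1) unfolding tuples_def by simp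
    have m: "map g xs = xs" using s1 by (simp add: map_idI)
    have "sfun X f (map g xs) = g (sfun X f xs)" using embD(4)[OF siso_emb[OF g] xt] .
    then show ?case using m by simp
  qed
qed

lemma aut_group_group:
  assumes st: "is_struct far X"
  shows "group (aut_group rar far X)"
proof (rule groupI)
  fix x y assume "x \<in> carrier (aut_group rar far X)" "y \<in> carrier (aut_group rar far X)"
  then show "x \<otimes>\<^bsub>aut_group rar far X\<^esub> y \<in> carrier (aut_group rar far X)"
    unfolding aut_carrier by (auto intro: siso_comp)
next
  show "\<one>\<^bsub>aut_group rar far X\<^esub> \<in> carrier (aut_group rar far X)"
    unfolding aut_carrier by (simp add: siso_id)
next
  fix x y z show "x \<otimes>\<^bsub>aut_group rar far X\<^esub> y \<otimes>\<^bsub>aut_group rar far X\<^esub> z =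
      x \<otimes>\<^bsub>aut_group rar far X\<^esub> (y \<otimes>\<^bsub>aut_group rar far X\<^esub> z)" by (simp add: comp_assoc)
next
  fix x show "\<one>\<^bsub>aut_group rar far X\<^esub> \<otimes>\<^bsub>aut_group rar far X\<^esub> x = x" by simp
next
  fix g assume g: "g \<in> carrier (aut_group rar far X)"
  then have gs: "siso rar far g X X" and go: "\<forall>x. x \<notin> sdom X \<longrightarrow> g x = x" unfolding aut_carrier by auto
  let ?i = "inv_into (sdom X) g"
  let ?h = "\<lambda>x. if x \<in> sdom X then ?i x else x"
  have "?h \<in> carrier (aut_group rar far X)" using aut_ext[OF st siso_inv[OF gs st]] .
  moreover have "?h \<circ> g = id"
  proof
    fix x
    have inj: "inj_on g (sdom X)" using embD(1)[OF siso_emb[OF gs]] .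
    have im: "g ` sdom X = sdom X" using gs unfolding siso_def by blast
    show "(?h \<circ> g) x = id x"
    proof (cases "x \<in> sdom X")
      case True
      then have "g x \<in> sdom X" using im by blast
      then show ?thesis using True inj by simp
    next
      case False
      then show ?thesis using go by simp
    qed
  qed
  ultimately show "\<exists>y\<in>carrier (aut_group rar far X). y \<otimes>\<^bsub>aut_group rar far X\<^esub> g = \<one>\<^bsub>aut_group rar far X\<^esub>"
    by auto
qed



lemma key:
  fixes rar :: "'r \<Rightarrow> nat" and far :: "'f \<Rightarrow> nat"
    and F :: "(nat, 'r, 'f) struc set" and X :: "(nat, 'r, 'f) struc"
  assumes FC: "fraisse_class rar far F"
    and HC: "hereditary_canonical_amalgamation rar far F"
    and FL: "fraisse_limit rar far F X"
    and a: "finite a" "a \<subseteq> b" and b: "finite b" "b \<subseteq> sdom X"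
    and g: "siso rar far g X X" "\<forall>x\<in>a. g x = x"
  shows "\<exists>h k. h \<in> carrier (aut_group rar far X) \<and> k \<in> carrier (aut_group rar far X) \<and>
           (\<forall>x\<in>a. k x = x) \<and> (\<forall>x\<in>b. h x = g x) \<and> (\<forall>x\<in>b. h (k x) = k x)"
proof -
  have stX: "is_struct far X" using fl_struct[OF FL] .
  obtain C where
    C1: "\<forall>A\<in>F. \<forall>B\<in>F. amalg_pos rar far A B \<longrightarrow> minimal_amalgamation rar far F A B (C A B)" and
    C2: "\<forall>A\<in>F. \<forall>B\<in>F. \<forall>A'\<in>F. \<forall>B'\<in>F. \<forall>\<phi> \<psi>.
         amalg_pos rar far A B \<and> amalg_pos rar far A' B' \<and>
         siso rar far \<phi> A A' \<and> siso rar far \<psi> B B' \<and>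
         (\<forall>x \<in> sdom A \<inter> sdom B. \<phi> x = \<psi> x) \<and>
         \<phi> ` (sdom A \<inter> sdom B) = sdom A' \<inter> sdom B' \<longrightarrow>
         (\<exists>\<theta>. siso rar far \<theta> (C A B) (C A' B') \<and> (\<forall>x\<in>sdom A. \<theta> x = \<phi> x) \<and>
               (\<forall>x\<in>sdom B. \<theta> x = \<psi> x))" and
    C3: "\<forall>A\<in>F. \<forall>B\<in>F. \<forall>A'\<in>F.
         amalg_pos rar far A B \<and> induced_sub rar far A' A \<and> sdom A \<inter> sdom B \<subseteq> sdom A' \<longrightarrow>
         (\<exists>\<theta>. siso rar far \<theta> (C A' B)
                 (restr (C A B) (acl far (C A B) (sdom A' \<union> sdom B))) \<and>
               (\<forall>x \<in> sdom A' \<union> sdom B. \<theta> x = x))"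
    using HC unfolding hereditary_canonical_amalgamation_def by blast
  define A where "A = acl far X a"
  define K1 where "K1 = acl far X b"
  define K2 where "K2 = acl far X (g ` b)"
  define K0 where "K0 = acl far X (b \<union> g ` b)"
  have gb: "g ` b \<subseteq> sdom X" using embD(2)[OF siso_emb[OF g(1)]] b(2) by blast
  have ab: "a \<subseteq> sdom X" using a b by blast
  have K2eq: "K2 = g ` K1" unfolding K1_def K2_def using emb_acl[OF siso_emb[OF g(1)] stX b(2)] by simp
  have gA: "\<forall>x\<in>A. g x = x" unfolding A_def using aut_fix_acl[OF g(1) stX ab g(2)] .
  have agb: "a \<subseteq> g ` b" using g(2) a(2) by force
  have AK1: "A \<subseteq> K1" unfolding A_def K1_def using acl_mono a(2) by blast
  have AK2: "A \<subseteq> K2" unfolding A_def K2_def using acl_mono agb by blast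
  have K10: "K1 \<subseteq> K0" unfolding K1_def K0_def by (rule acl_mono) blast
  have K20: "K2 \<subseteq> K0" unfolding K2_def K0_def by (rule acl_mono) blast
  have K0X: "K0 \<subseteq> sdom X" unfolding K0_def using acl_sub_dom[OF stX] gb b(2) by blast
  have cA: "closed_under far X A" and cK1: "closed_under far X K1" and cK2: "closed_under far X K2"
    and cK0: "closed_under far X K0" unfolding A_def K1_def K2_def K0_def by (simp_all add: acl_closed)
  have B1F: "restr X K1 \<in> F" unfolding K1_def using fl_age[OF FL b] .
  have B2F: "restr X K2 \<in> F" unfolding K2_def using fl_age[OF FL _ gb] b(1) by simp
  have B0F: "restr X K0 \<in> F" unfolding K0_def using fl_age[OF FL _] gb b by simp
  have finK0: "finite K0" using fc_finite[OF FC B0F] by simp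
  have finK1: "finite K1" using finite_subset[OF K10 finK0] .
  have finK2: "finite K2" using finite_subset[OF K20 finK0] .
  have AK0: "A \<subseteq> K0" using AK1 K10 by blast
  define m where "m = Suc (Max (insert 0 K0))"
  have le: "x \<in> K0 \<Longrightarrow> x < m" for x unfolding m_def using finK0 by (simp add: le_imp_less_Suc)
  define f where "f = (\<lambda>x::nat. if x \<in> A then x else x + m)"
  have finj: "inj f"
  proof (rule injI)
    fix x y assume "f x = f y"
    then show "x = y" unfolding f_def using le AK0 by (auto split: if_splits)
  qed
  have fA: "\<forall>x\<in>A. f x = x" unfolding f_def by simp
  have fK: "f ` K1 \<inter> K0 \<subseteq> A"
  proof
    fix y assume "y \<in> f ` K1 \<inter> K0"
    then obtain x where x: "x \<in> K1" "y = f x" "y \<in> K0" by blast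
    show "y \<in> A"
    proof (cases "x \<in> A")
      case True then show ?thesis using x fA by simp
    next
      case False then have "y = x + m" using x unfolding f_def by simp
      then show ?thesis using le[OF x(3)] by simp
    qed
  qed
  have AfK: "A \<subseteq> f ` K1" using fA AK1 by force
  define B' where "B' = copyS f (restr X K1)"
  have dB': "sdom B' = f ` K1" unfolding B'_def by simp
  have isoB': "siso rar far f (restr X K1) B'" unfolding B'_def using copy_siso[OF finj] .
  have stB1: "is_struct far (restr X K1)" using restr_struct[OF cK1] .
  have stB': "is_struct far B'" unfolding B'_def using copy_struct[OF finj stB1] .
  have B'F: "B' \<in> F" using fc_iso[OF FC B1F stB' isoB'] .
  have inter: "K \<inter> sdom B' = A" if "A \<subseteq> K" "K \<subseteq> K0" for K
  proof
    have "K \<inter> f ` K1 \<subseteq> f ` K1 \<inter> K0" using that(2) by blast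
    then show "K \<inter> sdom B' \<subseteq> A" unfolding dB' using fK by (rule order_trans)
    show "A \<subseteq> K \<inter> sdom B'" unfolding dB' using that(1) AfK by (rule Int_greatest)
  qed
  have amp: "amalg_pos rar far (restr X K) B'" if "A \<subseteq> K" "K \<subseteq> K0" for K
    unfolding amalg_pos_def
  proof (intro conjI allI ballI)
    fix r xs assume "xs \<in> tuples rar r (sdom (restr X K) \<inter> sdom B')"
    then have "set xs \<subseteq> A" using inter[OF that] unfolding tuples_def by simp
    then have "map (inv_into UNIV f) xs = xs" using map_inv_fix[OF finj] fA by blast
    then show "srel (restr X K) r xs = srel B' r xs" unfolding B'_def by simp
  next
    fix s xs assume "xs \<in> tuples far s (sdom (restr X K) \<inter> sdom B')"
    then have xA: "xs \<in> tuples far s A" using inter[OF that] by simp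
    then have "set xs \<subseteq> A" unfolding tuples_def by simp
    then have "map (inv_into UNIV f) xs = xs" using map_inv_fix[OF finj] fA by blast
    moreover have "sfun X s xs \<in> A" using cA xA unfolding closed_under_def by blast
    ultimately show "sfun (restr X K) s xs = sfun B' s xs" unfolding B'_def using fA by simp
  qed
  have amp0: "amalg_pos rar far (restr X K0) B'" using amp AK0 by blast
  have amp1: "amalg_pos rar far (restr X K1) B'" using amp AK1 K10 by blast
  have amp2: "amalg_pos rar far (restr X K2) B'" using amp AK2 K20 by blast
  define D where "D = C (restr X K0) B'"
  have mD: "minimal_amalgamation rar far F (restr X K0) B' D" unfolding D_def using C1 B0F B'F amp0 by blast
  then have DF: "D \<in> F" and DK: "K0 \<union> f ` K1 \<subseteq> sdom D" and iB0: "induced_sub rar far (restr X K0) D"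
    and iB': "induced_sub rar far B' D"
    unfolding minimal_amalgamation_def is_amalgamation_def dB' by auto
  have stD: "is_struct far D" using fc_struct[OF FC DF] .
  obtain \<theta>1 where \<theta>1: "siso rar far \<theta>1 (C (restr X K1) B') (restr D (acl far D (K1 \<union> f ` K1)))"
      "\<forall>x \<in> K1 \<union> f ` K1. \<theta>1 x = x"
  proof -
    have "induced_sub rar far (restr X K1) (restr X K0)" using induced_restr[OF cK1 K10] .
    moreover have "sdom (restr X K0) \<inter> sdom B' \<subseteq> sdom (restr X K1)" using inter[OF AK0] AK1 by simp
    ultimately show ?thesis using that C3 B0F B'F B1F amp0 dB' unfolding D_def by fastforce
  qed
  obtain \<theta>2 where \<theta>2: "siso rar far \<theta>2 (C (restr X K2) B') (restr D (acl far D (K2 \<union> f ` K1)))"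
      "\<forall>x \<in> K2 \<union> f ` K1. \<theta>2 x = x"
  proof -
    have "induced_sub rar far (restr X K2) (restr X K0)" using induced_restr[OF cK2 K20] .
    moreover have "sdom (restr X K0) \<inter> sdom B' \<subseteq> sdom (restr X K2)" using inter[OF AK0] AK2 by simp
    ultimately show ?thesis using that C3 B0F B'F B2F amp0 dB' unfolding D_def by fastforce
  qed
  obtain \<theta> where \<theta>: "siso rar far \<theta> (C (restr X K1) B') (C (restr X K2) B')"
      "\<forall>x\<in>K1. \<theta> x = g x" "\<forall>x\<in>f ` K1. \<theta> x = x"
  proof -
    have "siso rar far g (restr X K1) (restr X (g ` K1))"
      using emb_restr[OF siso_emb[OF g(1)]] K10 K0X by blast
    then have gi: "siso rar far g (restr X K1) (restr X K2)" using K2eq by simp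
    have ag: "\<forall>x \<in> sdom (restr X K1) \<inter> sdom B'. g x = id x" using inter[OF AK1 K10] gA by simp
    have im: "g ` (sdom (restr X K1) \<inter> sdom B') = sdom (restr X K2) \<inter> sdom B'"
      using inter[OF AK1 K10] inter[OF AK2 K20] gA by (simp add: image_cong)
    have "\<exists>\<theta>. siso rar far \<theta> (C (restr X K1) B') (C (restr X K2) B') \<and> (\<forall>x\<in>sdom (restr X K1). \<theta> x = g x) \<and>
               (\<forall>x\<in>sdom B'. \<theta> x = id x)"
      using C2 B1F B'F B2F amp1 amp2 gi siso_id ag im by blast
    then show ?thesis using that dB' by auto
  qed
  have mD1: "minimal_amalgamation rar far F (restr X K1) B' (C (restr X K1) B')" using C1 B1F B'F amp1 by blast
  then have CF1: "C (restr X K1) B' \<in> F" and CK1: "K1 \<subseteq> sdom (C (restr X K1) B')"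
    unfolding minimal_amalgamation_def is_amalgamation_def by auto
  have stC1: "is_struct far (C (restr X K1) B')" using fc_struct[OF FC CF1] .
  define L1 where "L1 = acl far D (K1 \<union> f ` K1)"
  define L2 where "L2 = acl far D (K2 \<union> f ` K1)"
  define \<Theta> where "\<Theta> = \<theta>2 \<circ> (\<theta> \<circ> inv_into (sdom (C (restr X K1) B')) \<theta>1)"
  have \<Theta>iso: "siso rar far \<Theta> (restr D L1) (restr D L2)"
    unfolding \<Theta>_def L1_def L2_def
    using siso_comp[OF siso_comp[OF siso_inv[OF \<theta>1(1) stC1] \<theta>(1)] \<theta>2(1)] .
  have inj1: "inj_on \<theta>1 (sdom (C (restr X K1) B'))" using embD(1)[OF siso_emb[OF \<theta>1(1)]] .
  have \<Theta>1: "\<Theta> y = g y" if "y \<in> K1" for y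
  proof -
    have "inv_into (sdom (C (restr X K1) B')) \<theta>1 y = y"
      using inv_into_f_f[OF inj1, of y] \<theta>1(2) that CK1 by auto
    moreover have "g y \<in> K2" using K2eq that by blast
    ultimately show ?thesis unfolding \<Theta>_def using \<theta>(2) \<theta>2(2) that by simp
  qed
  have \<Theta>2: "\<Theta> y = y" if "y \<in> f ` K1" for y
  proof -
    have "f ` K1 \<subseteq> sdom (C (restr X K1) B')"
      using mD1 dB' unfolding minimal_amalgamation_def is_amalgamation_def by auto
    then have "inv_into (sdom (C (restr X K1) B')) \<theta>1 y = y"
      using inv_into_f_f[OF inj1, of y] \<theta>1(2) that by auto
    moreover have "\<theta> y = y" using \<theta>(3) that by blast
    moreover have "\<theta>2 y = y" using \<theta>2(2) that by blast
    ultimately show ?thesis unfolding \<Theta>_def by simp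
  qed
  obtain e where e: "embedding rar far e D X" "\<forall>x\<in>K0. e x = x"
  proof -
    have agf: "\<forall>s. \<forall>xs\<in>tuples far s K0. sfun D s xs = sfun X s xs"
      using iB0 unfolding induced_sub_def by simp
    have agr: "\<forall>r. \<forall>xs\<in>tuples rar r K0. srel D r xs = srel X r xs"
      using iB0 unfolding induced_sub_def by simp
    show ?thesis using extension[OF FL DF K0X finK0 cK0 _ agf agr] DK that by blast
  qed
  have K1D: "K1 \<union> f ` K1 \<subseteq> sdom D" using DK K10 by blast
  have K2D: "K2 \<union> f ` K1 \<subseteq> sdom D" using DK K20 by blast
  have fKD: "f ` K1 \<subseteq> sdom D" using DK by blast
  have L1D: "L1 \<subseteq> sdom D" unfolding L1_def using acl_sub_dom[OF stD K1D] .
  have L2D: "L2 \<subseteq> sdom D" unfolding L2_def using acl_sub_dom[OF stD K2D] .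
  define c where "c = e ` f ` K1"
  have eK1: "e ` K1 = K1"
  proof -
    have "e ` K1 = id ` K1" by (rule image_cong) (use e(2) K10 in auto)
    then show ?thesis by simp
  qed
  have eK2: "e ` K2 = K2"
  proof -
    have "e ` K2 = id ` K2" by (rule image_cong) (use e(2) K20 in auto)
    then show ?thesis by simp
  qed
  have eL1: "e ` L1 = acl far X (K1 \<union> c)"
    unfolding L1_def c_def using emb_acl[OF e(1) stD K1D] eK1 by (simp add: image_Un)
  have eL2: "e ` L2 = acl far X (K2 \<union> c)"
    unfolding L2_def c_def using emb_acl[OF e(1) stD K2D] eK2 by (simp add: image_Un)
  have injL1: "inj_on e L1" using embD(1)[OF e(1)] L1D inj_on_subset by blast
  have eiso1: "siso rar far e (restr D L1) (restr X (e ` L1))" using emb_restr[OF e(1) L1D] .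
  have eiso2: "siso rar far e (restr D L2) (restr X (e ` L2))" using emb_restr[OF e(1) L2D] .
  have stL1: "is_struct far (restr D L1)" unfolding L1_def by (rule restr_struct[OF acl_closed])
  have einv: "siso rar far (inv_into L1 e) (restr X (e ` L1)) (restr D L1)"
    using siso_inv[OF eiso1 stL1] by simp
  define \<Phi> where "\<Phi> = e \<circ> (\<Theta> \<circ> inv_into L1 e)"
  have \<Phi>iso: "siso rar far \<Phi> (restr X (acl far X (K1 \<union> c))) (restr X (acl far X (K2 \<union> c)))"
    unfolding \<Phi>_def using siso_comp[OF siso_comp[OF einv \<Theta>iso] eiso2] eL1 eL2 by simp
  have cX: "c \<subseteq> sdom X" unfolding c_def using embD(2)[OF e(1)] fKD by blast
  have finc: "finite c" unfolding c_def using finK1 by simp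
  have S1: "K1 \<union> c \<subseteq> sdom X" using cX K10 K0X by blast
  have S2: "K2 \<union> c \<subseteq> sdom X" using cX K20 K0X by blast
  obtain \<psi> where \<psi>: "siso rar far \<psi> X X" "\<forall>x \<in> acl far X (K1 \<union> c). \<psi> x = \<Phi> x"
    using fl_uh[OF FL _ _ S1 S2 \<Phi>iso] finc finK1 finK2 by blast
  define h where "h = (\<lambda>x. if x \<in> sdom X then \<psi> x else x)"
  have hG: "h \<in> carrier (aut_group rar far X)" unfolding h_def by (rule aut_ext[OF stX \<psi>(1)])
  have hb: "\<forall>x\<in>b. h x = g x"
  proof
    fix x assume xb: "x \<in> b"
    have xK1: "x \<in> K1" unfolding K1_def using xb acl_base_sub[of b far X] by blast
    have xX: "x \<in> sdom X" using xb b(2) by blast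
    have xS: "x \<in> acl far X (K1 \<union> c)" using xK1 acl_base_sub[of "K1 \<union> c" far X] by blast
    have xL1: "x \<in> L1" unfolding L1_def using xK1 acl_base_sub[of "K1 \<union> f ` K1" far D] by blast
    have ex: "e x = x" using e(2) xK1 K10 by blast
    have "inv_into L1 e (e x) = x" using inv_into_f_f[OF injL1 xL1] .
    then have ix: "inv_into L1 e x = x" using ex by simp
    have gK0: "g x \<in> K0" using K2eq xK1 K20 by blast
    have "h x = \<psi> x" unfolding h_def using xX by simp
    also have "\<dots> = \<Phi> x" using \<psi>(2) xS by blast
    also have "\<dots> = e (g x)" unfolding \<Phi>_def using ix \<Theta>1[OF xK1] by simp
    also have "\<dots> = g x" using e(2) gK0 by blast
    finally show "h x = g x" .
  qed
  have hc: "\<forall>x\<in>c. h x = x"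
  proof
    fix x assume xc: "x \<in> c"
    then obtain y where y: "y \<in> f ` K1" "x = e y" unfolding c_def by blast
    have xX: "x \<in> sdom X" using xc cX by blast
    have xS: "x \<in> acl far X (K1 \<union> c)" using xc acl_base_sub[of "K1 \<union> c" far X] by blast
    have yL1: "y \<in> L1" unfolding L1_def using y(1) acl_base_sub[of "K1 \<union> f ` K1" far D] by blast
    have ix: "inv_into L1 e x = y" using inv_into_f_f[OF injL1 yL1] y(2) by simp
    have "h x = \<psi> x" unfolding h_def using xX by simp
    also have "\<dots> = \<Phi> x" using \<psi>(2) xS by blast
    also have "\<dots> = e y" unfolding \<Phi>_def using ix \<Theta>2[OF y(1)] by simp
    finally show "h x = x" using y(2) by simp
  qed
  have eB': "siso rar far e B' (restr X (e ` sdom B'))"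
    using emb_restr[OF emb_sub[OF iB' e(1)] order_refl] by simp
  have kiso0: "siso rar far (e \<circ> f) (restr X K1) (restr X c)"
    using siso_comp[OF isoB' eB'] dB' unfolding c_def by simp
  have "acl far D (f ` K1) = f ` K1" using acl_closed_eq[OF induced_closed[OF iB']] dB' by simp
  then have aclc: "acl far X c = c" unfolding c_def using emb_acl[OF e(1) stD fKD] by simp
  have kiso: "siso rar far (e \<circ> f) (restr X (acl far X b)) (restr X (acl far X c))"
    using kiso0 aclc unfolding K1_def by simp
  obtain \<psi>k where \<psi>k: "siso rar far \<psi>k X X" "\<forall>x \<in> acl far X b. \<psi>k x = (e \<circ> f) x"
    using fl_uh[OF FL b(1) finc b(2) cX kiso] by blast
  define k where "k = (\<lambda>x. if x \<in> sdom X then \<psi>k x else x)"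
  have kG: "k \<in> carrier (aut_group rar far X)" unfolding k_def by (rule aut_ext[OF stX \<psi>k(1)])
  have kK1: "k x = e (f x)" if "x \<in> K1" for x
  proof -
    have "x \<in> sdom X" using that K10 K0X by blast
    then show ?thesis unfolding k_def using \<psi>k(2) that unfolding K1_def by simp
  qed
  have ka: "\<forall>x\<in>a. k x = x"
  proof
    fix x assume xa: "x \<in> a"
    have xA: "x \<in> A" unfolding A_def using xa acl_base_sub[of a far X] by blast
    have "k x = e (f x)" using kK1 xA AK1 by blast
    also have "\<dots> = e x" using fA xA by simp
    also have "\<dots> = x" using e(2) xA AK0 by blast
    finally show "k x = x" .
  qed
  have hk: "\<forall>x\<in>b. h (k x) = k x"
  proof
    fix x assume xb: "x \<in> b"
    have xK1: "x \<in> K1" unfolding K1_def using xb acl_base_sub[of b far X] by blast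
    have "k x \<in> c" using kK1[OF xK1] xK1 unfolding c_def by blast
    then show "h (k x) = k x" using hc by blast
  qed
  show ?thesis using hG kG ka hb hk by blast
qed



theorem mainTheorem14:
  fixes rar :: "'r \<Rightarrow> nat" and far :: "'f \<Rightarrow> nat"
    and F :: "(nat, 'r, 'f) struc set" and X :: "(nat, 'r, 'f) struc"
  assumes "fraisse_class rar far F"
    and "disjoint_amalgamation rar far F"
    and "hereditary_canonical_amalgamation rar far F"
    and "fraisse_limit rar far F X"
  shows "simple_dynamical_ideal (aut_group rar far X) (sdom X) (\<lambda>g x. g x)
           {a. finite a \<and> a \<subseteq> sdom X}"
proof -
  let ?G = "aut_group rar far X"
  let ?act = "\<lambda>(g::nat \<Rightarrow> nat) x. g x"
  let ?I = "{a. finite a \<and> a \<subseteq> sdom X}"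
  have stX: "is_struct far X" using fl_struct[OF assms(4)] .
  have grp: "group ?G" using aut_group_group[OF stX] .
  have ga: "group_act ?G (sdom X) ?act" unfolding group_act_def
  proof (intro conjI ballI)
    show "group ?G" by (rule grp)
  next
    fix g assume "g \<in> carrier ?G"
    then have gs: "siso rar far g X X" unfolding aut_carrier by blast
    show "bij_betw g (sdom X) (sdom X)" unfolding bij_betw_def
      using embD(1)[OF siso_emb[OF gs]] gs unfolding siso_def by blast
  qed simp_all
  have dyn: "dynamical_ideal ?G (sdom X) ?act ?I" unfolding dynamical_ideal_def ideal_on_def
  proof (intro conjI ballI allI impI)
    fix g a assume g: "g \<in> carrier ?G" and a: "a \<in> ?I"
    then have gs: "siso rar far g X X" unfolding aut_carrier by blast
    show "?act g ` a \<in> ?I" using a embD(2)[OF siso_emb[OF gs]] by auto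
  qed (use ga in \<open>auto intro: finite_subset\<close>)
  show ?thesis unfolding simple_dynamical_ideal_def
  proof (intro conjI ballI allI impI)
    show "dynamical_ideal ?G (sdom X) ?act ?I" by (rule dyn)
  next
    fix a b N assume a: "a \<in> ?I" and b: "b \<in> ?I" and ab: "a \<subseteq> b"
      and N: "N \<lhd> ?G\<lparr>carrier := pstab ?G ?act a\<rparr> \<and> pstab ?G ?act b \<subseteq> N"
    let ?H = "?G\<lparr>carrier := pstab ?G ?act a\<rparr>"
    have nN: "N \<lhd> ?H" and bN: "pstab ?G ?act b \<subseteq> N" using N by auto
    interpret H: group ?H using nN unfolding normal_def by blast
    interpret NS: subgroup N ?H using nN unfolding normal_def by blast
    have cH: "carrier ?H = pstab ?G ?act a" by simp
    have mH: "x \<otimes>\<^bsub>?H\<^esub> y = x \<circ> y" for x y by simp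
    have oH: "\<one>\<^bsub>?H\<^esub> = id" by simp
    show "N = pstab ?G ?act a"
    proof
      show "N \<subseteq> pstab ?G ?act a" using NS.subset by simp
    next
      show "pstab ?G ?act a \<subseteq> N"
      proof
        fix g assume gP: "g \<in> pstab ?G ?act a"
        then have gG: "g \<in> carrier ?G" and gfix: "\<forall>x\<in>a. g x = x" unfolding pstab_def by auto
        have gs: "siso rar far g X X" using gG unfolding aut_carrier by blast
        obtain h k where hk: "h \<in> carrier ?G" "k \<in> carrier ?G" "\<forall>x\<in>a. k x = x"
          "\<forall>x\<in>b. h x = g x" "\<forall>x\<in>b. h (k x) = k x"
          using key[OF assms(1,3,4) _ ab _ _ gs gfix] a b by blast
        have kH: "k \<in> carrier ?H" using hk(2,3) unfolding pstab_def by simp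
        have hH: "h \<in> carrier ?H" using hk(1,4) gfix ab unfolding pstab_def by auto
        have gH: "g \<in> carrier ?H" using gP by simp
        define k' where "k' = inv\<^bsub>?H\<^esub> k"
        have k'H: "k' \<in> carrier ?H" unfolding k'_def by (rule H.inv_closed[OF kH])
        have k'k: "k' \<circ> k = id" unfolding k'_def using H.l_inv[OF kH] by simp
        have kk': "k \<circ> k' = id" unfolding k'_def using H.r_inv[OF kH] by simp
        have k'kx: "k' (k x) = x" for x using fun_cong[OF k'k, of x] by simp
        have kk'x: "k (k' x) = x" for x using fun_cong[OF kk', of x] by simp
        define h' where "h' = k' \<circ> h \<circ> k"
        have h'H: "h' \<in> carrier ?H" unfolding h'_def using k'H hH kH H.m_closed by (metis mH)
        have h'b: "h' \<in> pstab ?G ?act b"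
          using h'H hk(5) k'kx unfolding h'_def pstab_def by auto
        then have h'N: "h' \<in> N" using bN by blast
        have "k \<otimes>\<^bsub>?H\<^esub> h' \<otimes>\<^bsub>?H\<^esub> inv\<^bsub>?H\<^esub> k \<in> N"
          using normal.inv_op_closed2[OF nN kH h'N] .
        moreover have "k \<otimes>\<^bsub>?H\<^esub> h' \<otimes>\<^bsub>?H\<^esub> inv\<^bsub>?H\<^esub> k = h"
          unfolding mH k'_def[symmetric] h'_def by (simp add: fun_eq_iff kk'x)
        ultimately have hN: "h \<in> N" by simp
        define g' where "g' = inv\<^bsub>?H\<^esub> g"
        have g'H: "g' \<in> carrier ?H" unfolding g'_def by (rule H.inv_closed[OF gH])
        have g'g: "g' \<circ> g = id" unfolding g'_def using H.l_inv[OF gH] by simp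
        have g'gx: "g' (g x) = x" for x using fun_cong[OF g'g, of x] by simp
        define mm where "mm = g' \<circ> h"
        have mmH: "mm \<in> carrier ?H" unfolding mm_def using g'H hH H.m_closed by (metis mH)
        have "mm \<in> pstab ?G ?act b" using mmH hk(4) g'gx unfolding mm_def pstab_def by auto
        then have mmN: "mm \<in> N" using bN by blast
        have "h \<otimes>\<^bsub>?H\<^esub> inv\<^bsub>?H\<^esub> mm \<in> N" using hN NS.m_inv_closed[OF mmN] NS.m_closed by blast
        moreover have "h \<otimes>\<^bsub>?H\<^esub> inv\<^bsub>?H\<^esub> mm = g"
        proof -
          have "inv\<^bsub>?H\<^esub> mm = inv\<^bsub>?H\<^esub> h \<otimes>\<^bsub>?H\<^esub> g"
            unfolding mm_def g'_def using H.inv_mult_group[OF H.inv_closed[OF gH] hH] gH mH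
            by (metis H.inv_inv)
          then show ?thesis using H.m_assoc[OF hH H.inv_closed[OF hH] gH] H.r_inv[OF hH] H.l_one[OF gH]
            by simp
        qed
        ultimately show "g \<in> N" by simp
      qed
    qed
  qed
qed


end
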